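(* Let $n\in\mathbb N$, let $\sigma$ be a cyclic permutation of $(1,2,3,4)$ (i.e. a power of the $4$-cycle $(1\,2\,3\,4)$), and let $M=\frac{n}{2n-1}\sum_{i=1}^4\mathfrak P^{(n)}_i\otimes\mathfrak P^{(n)}_{\sigma(i)}$ acting on $\mathbb C^n\otimes\mathbb C^n$. (i) If $\sigma=\mathrm{id}$, then the largest eigenvalue of $M$ is $1$, and the corresponding eigenspace is $\mathbb C|\phi_n\rangle$. (ii) If $\sigma\neq\mathrm{id}$, then all eigenvalues of $M$ are strictly smaller than $1$.
   Context: $|\phi_n\rangle=\frac1{\sqrt n}\sum_{i=1}^n|i\rangle|i\rangle\in\mathbb C^n\otimes\mathbb C^n$ is the maximally entangled state. For $n\in\mathbb N$, $\mathfrak P^{(n)}_1,\dots,\mathfrak P^{(n)}_4\in M_n(\mathbb R)$ denote orthogonal projections (real symmetric idempotent matrices) such that (i) $\mathfrak P^{(n)}_1+\dots+\mathfrak P^{(n)}_4=(2-\frac1n)I_n$; (ii) $\operatorname{rk}\mathfrak P^{(n)}_1=\lfloor\frac n2\rfloor-(-1)^n$ and $\operatorname{rk}\mathfrak P^{(n)}_i=\lfloor\frac n2\rfloor$ for $i=2,3,4$; (iii) the only subspaces of $\mathbb C^n$ invariant under all four matrices are $0$ and $\mathbb C^n$. Such quadruples exist for every $n$, and any two of them are simultaneously unitarily equivalent; moreover, any quadruple of orthogonal projections on a Hilbert space summing to $(2-\frac1n)I$ with no nontrivial common invariant closed subspace is unitarily equivalent to one of the four cyclic shifts $(\mathfrak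 P^{(n)}_{\sigma(1)},\dots,\mathfrak P^{(n)}_{\sigma(4)})$, $\sigma$ a power of the cycle $(1\,2\,3\,4)$, and these four are pairwise inequivalent. *)

theory Defs
  imports "HOL-Analysis.Analysis"
begin

definition cmat :: "real^'n^'m \<Rightarrow> complex^'n^'m" where
  "cmat A = (\<chi> i j. complex_of_real (A $ i $ j))"

definition kron :: "'a::times^'n^'n \<Rightarrow> 'a^'n^'n \<Rightarrow> 'a^('n \<times> 'n)^('n \<times> 'n)" where
  "kron A B = (\<chi> p q. A $ fst p $ fst q * B $ snd p $ snd q)"

definition max_ent :: "complex^('n::finite \<times> 'n)" where
  "max_ent = (\<chi> p. if fst p = snd p then complex_of_real (1 / sqrt (real CARD('n))) else 0)"

definition is_eigenvalue :: "complex^'n^'n \<Rightarrow> complex \<Rightarrow> bool" where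
  "is_eigenvalue M c \<longleftrightarrow> (\<exists>v. v \<noteq> 0 \<and> M *v v = c *s v)"

definition csubspace :: "(complex^'n) set \<Rightarrow> bool" where
  "csubspace W \<longleftrightarrow> 0 \<in> W \<and> (\<forall>x\<in>W. \<forall>y\<in>W. x + y \<in> W) \<and> (\<forall>c. \<forall>x\<in>W. c *s x \<in> W)"

definition orth_proj :: "real^'n^'n \<Rightarrow> bool" where
  "orth_proj P \<longleftrightarrow> transpose P = P \<and> P ** P = P"

definition frakP_quadruple :: "(nat \<Rightarrow> real^'n::finite^'n) \<Rightarrow> bool" where
  "frakP_quadruple P \<longleftrightarrow>
     (\<forall>i\<in>{1..4}. orth_proj (P i)) \<and>
     (\<Sum>i=1..4. P i) = (2 - 1 / real CARD('n)) *\<^sub>R mat 1 \<and>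
     int (rank (P 1)) = int (CARD('n) div 2) - (-1) ^ CARD('n) \<and>
     (\<forall>i\<in>{2..4}. rank (P i) = CARD('n) div 2) \<and>
     (\<forall>W::(complex^'n) set. csubspace W \<and> (\<forall>i\<in>{1..4}. \<forall>x\<in>W. cmat (P i) *v x \<in> W)
        \<longrightarrow> W = {0} \<or> W = UNIV)"

end

theory Submission
  imports Defs
begin

lemma sum_UNIV_pair: "(\<Sum>p\<in>(UNIV::('a::finite\<times>'b::finite) set). f p) = (\<Sum>a\<in>UNIV. \<Sum>b\<in>UNIV. f (a,b))"
  by (simp add: sum.cartesian_product UNIV_Times_UNIV[symmetric] del: UNIV_Times_UNIV)

lemma kron_mult:
  fixes A B C D :: "'a::comm_semiring_1^'n::finite^'n"
  shows "kron A B ** kron C D = kron (A ** C) (B ** D)"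
  unfolding kron_def matrix_matrix_mult_def
  by (simp add: vec_eq_iff sum_UNIV_pair sum_product mult_ac)

lemma kron_transpose: "transpose (kron A B) = kron (transpose A) (transpose B)"
  by (simp add: kron_def transpose_def vec_eq_iff)

lemma kron_sum_left:
  fixes A :: "'i \<Rightarrow> 'a::comm_semiring_1^'n::finite^'n"
  shows "kron (\<Sum>i\<in>I. A i) B = (\<Sum>i\<in>I. kron (A i) B)"
  by (simp add: kron_def vec_eq_iff sum_distrib_right)

lemma kron_sum_right:
  fixes A :: "'i \<Rightarrow> 'a::comm_semiring_1^'n::finite^'n"
  shows "kron B (\<Sum>i\<in>I. A i) = (\<Sum>i\<in>I. kron B (A i))"
  by (simp add: kron_def vec_eq_iff sum_distrib_left)

lemma kron_scaleR_left:
  fixes A :: "real^'n::finite^'n"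
  shows "kron (c *\<^sub>R A) B = c *\<^sub>R kron A B"
  by (simp add: kron_def vec_eq_iff)

lemma kron_scaleR_right:
  fixes A :: "real^'n::finite^'n"
  shows "kron B (c *\<^sub>R A) = c *\<^sub>R kron B A"
  by (simp add: kron_def vec_eq_iff)

lemma kron_mat1: "kron (mat 1 :: 'a::comm_semiring_1^'n::finite^'n) (mat 1) = mat 1"
  by (auto simp add: kron_def vec_eq_iff mat_def prod_eq_iff)

lemma cmat_kron: "cmat (kron A B) = kron (cmat A) (cmat B)"
  by (simp add: cmat_def kron_def vec_eq_iff)

lemma cmat_sum: "cmat (\<Sum>i\<in>I. A i) = (\<Sum>i\<in>I. cmat (A i))"
  by (simp add: cmat_def vec_eq_iff)

lemma cmat_scaleR: "cmat (c *\<^sub>R A) = c *\<^sub>R cmat A"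
  by (simp add: cmat_def vec_eq_iff of_real_def)

lemma cmat_mult: "cmat (A ** B) = cmat A ** cmat B"
  by (simp add: cmat_def matrix_matrix_mult_def vec_eq_iff)

lemma sym_dot:
  fixes T :: "real^'m::finite^'m"
  assumes "transpose T = T"
  shows "x \<bullet> (T *v y) = (T *v x) \<bullet> y"
  by (metis assms dot_lmul_matrix transpose_matrix_vector)

lemma proj_dot:
  fixes K :: "real^'m::finite^'m"
  assumes "transpose K = K" "K ** K = K"
  shows "x \<bullet> (K *v x) = (K *v x) \<bullet> (K *v x)"
  by (metis assms matrix_vector_mul_assoc sym_dot)

lemma proj_norm:
  fixes K :: "real^'m::finite^'m"
  assumes "transpose K = K" "K ** K = K"
  shows "(K *v x) \<bullet> (K *v x) \<le> x \<bullet> x"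
    and "(K *v x) \<bullet> (K *v x) = x \<bullet> x \<Longrightarrow> K *v x = x"
proof -
  have o: "(K *v x) \<bullet> (x - K *v x) = 0"
    using proj_dot[OF assms, of x] by (simp add: inner_diff_right inner_commute)
  have e: "x \<bullet> x = (K *v x) \<bullet> (K *v x) + (x - K *v x) \<bullet> (x - K *v x)"
    using o by (simp add: inner_diff_left inner_diff_right inner_commute)
  show "(K *v x) \<bullet> (K *v x) \<le> x \<bullet> x" using e by simp
  assume "(K *v x) \<bullet> (K *v x) = x \<bullet> x"
  with e have "(x - K *v x) \<bullet> (x - K *v x) = 0" by simp
  then show "K *v x = x" by simp
qed

lemma sum_mvmult:
  "(\<Sum>i\<in>I. A i) *v x = (\<Sum>i\<in>I. A i *v (x::'a::comm_semiring_1^'m::finite))"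
  by (simp add: matrix_vector_mult_def vec_eq_iff sum_distrib_right sum.swap[of _ I])

definition unvec :: "'a^('n \<times> 'n) \<Rightarrow> 'a^'n^'n" where
  "unvec w = (\<chi> a b. w $ (a,b))"

definition cvec :: "real^'m \<Rightarrow> complex^'m" where
  "cvec x = (\<chi> p. complex_of_real (x $ p))"

lemma kron_left_apply:
  fixes P :: "'a::comm_semiring_1^'n::finite^'n"
  shows "(kron P (mat 1) *v w) $ (a,b) = (P ** unvec w) $ a $ b"
  by (simp add: kron_def matrix_vector_mult_def matrix_matrix_mult_def unvec_def sum_UNIV_pair mat_def
       if_distrib if_distribR sum.If_cases cong del: if_weak_cong)

lemma kron_right_apply:
  fixes Q :: "'a::comm_semiring_1^'n::finite^'n"
  shows "(kron (mat 1) Q *v w) $ (a,b) = (unvec w ** transpose Q) $ a $ b"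
  by (simp add: kron_def matrix_vector_mult_def matrix_matrix_mult_def unvec_def sum_UNIV_pair mat_def
       transpose_def if_distrib if_distribR sum.If_cases mult.commute cong del: if_weak_cong)

lemma unvec_inj: "unvec v = unvec w \<Longrightarrow> v = w"
  by (simp add: unvec_def vec_eq_iff)

lemma cmat_cvec: "cmat A *v cvec x = cvec (A *v x)"
  by (simp add: cmat_def cvec_def matrix_vector_mult_def vec_eq_iff)

lemma cvec_inj: "cvec x = cvec y \<Longrightarrow> x = y"
  by (simp add: cvec_def vec_eq_iff)

lemma kron_proj:
  fixes P Q :: "real^'n::finite^'n"
  assumes "orth_proj P" "orth_proj Q"
  shows "transpose (kron P Q) = kron P Q" "kron P Q ** kron P Q = kron P Q"
  using assms by (simp_all add: orth_proj_def kron_transpose kron_mult)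

lemma orth_proj_mat1: "orth_proj (mat 1)"
  by (simp add: orth_proj_def)

lemma scaleR_mat1_mv: "(c *\<^sub>R mat 1) *v x = c *\<^sub>R (x::real^'m::finite)"
  by (simp add: vec_eq_iff matrix_vector_mult_def mat_def if_distrib if_distribR sum.If_cases cong del: if_weak_cong)

lemma quad_bound:
  fixes P Q :: "nat \<Rightarrow> real^'n::finite^'n" and w :: "real^('n\<times>'n)"
  assumes fin: "finite I"
    and pp: "\<And>i. i \<in> I \<Longrightarrow> orth_proj (P i)" and qp: "\<And>i. i \<in> I \<Longrightarrow> orth_proj (Q i)"
    and sP: "(\<Sum>i\<in>I. P i) = s *\<^sub>R mat 1" and sQ: "(\<Sum>i\<in>I. Q i) = s *\<^sub>R mat 1"
  shows "w \<bullet> ((\<Sum>i\<in>I. kron (P i) (Q i)) *v w) \<le> s * (w \<bullet> w)"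
    and "w \<bullet> ((\<Sum>i\<in>I. kron (P i) (Q i)) *v w) = s * (w \<bullet> w) \<Longrightarrow>
         \<forall>i\<in>I. kron (P i) (mat 1) *v w = kron (mat 1) (Q i) *v w"
proof -
  define A where "A i = kron (P i) (mat 1)" for i
  define B where "B i = kron (mat 1) (Q i)" for i
  define K where "K i = kron (P i) (Q i)" for i
  have Ap: "transpose (A i) = A i" "A i ** A i = A i" if "i \<in> I" for i
    using kron_proj[OF pp[OF that] orth_proj_mat1] A_def by auto
  have Bp: "transpose (B i) = B i" "B i ** B i = B i" if "i \<in> I" for i
    using kron_proj[OF orth_proj_mat1 qp[OF that]] B_def by auto
  have KAB: "K i = A i ** B i" "K i = B i ** A i" for i
    by (simp_all add: K_def A_def B_def kron_mult)
  define a where "a i = w \<bullet> (A i *v w)" for i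
  define b where "b i = w \<bullet> (B i *v w)" for i
  define k where "k i = w \<bullet> (K i *v w)" for i
  have ka: "k i \<le> a i" "k i \<le> b i" if "i \<in> I" for i
  proof -
    have Kp: "transpose (K i) = K i" "K i ** K i = K i"
      using kron_proj[OF pp[OF that] qp[OF that]] K_def by auto
    have "k i = (B i *v (A i *v w)) \<bullet> (B i *v (A i *v w))"
      using proj_dot[OF Kp, of w] by (simp add: k_def KAB(2)[of i] matrix_vector_mul_assoc)
    also have "\<dots> \<le> (A i *v w) \<bullet> (A i *v w)" by (rule proj_norm(1)[OF Bp[OF that]])
    also have "\<dots> = a i" using proj_dot[OF Ap[OF that], of w] by (simp add: a_def)
    finally show "k i \<le> a i" .
    have "k i = (A i *v (B i *v w)) \<bullet> (A i *v (B i *v w))"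
      using proj_dot[OF Kp, of w] by (simp add: k_def KAB(1)[of i] matrix_vector_mul_assoc)
    also have "\<dots> \<le> (B i *v w) \<bullet> (B i *v w)" by (rule proj_norm(1)[OF Ap[OF that]])
    also have "\<dots> = b i" using proj_dot[OF Bp[OF that], of w] by (simp add: b_def)
    finally show "k i \<le> b i" .
  qed
  have suma: "(\<Sum>i\<in>I. a i) = s * (w \<bullet> w)"
  proof -
    have "(\<Sum>i\<in>I. a i) = w \<bullet> ((\<Sum>i\<in>I. A i) *v w)"
      by (simp add: a_def sum_mvmult inner_sum_right)
    also have "(\<Sum>i\<in>I. A i) = s *\<^sub>R mat 1"
      by (simp add: A_def kron_sum_left[symmetric] sP kron_scaleR_left kron_mat1)
    finally show ?thesis by (simp add: scaleR_mat1_mv)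
  qed
  have sumb: "(\<Sum>i\<in>I. b i) = s * (w \<bullet> w)"
  proof -
    have "(\<Sum>i\<in>I. b i) = w \<bullet> ((\<Sum>i\<in>I. B i) *v w)"
      by (simp add: b_def sum_mvmult inner_sum_right)
    also have "(\<Sum>i\<in>I. B i) = s *\<^sub>R mat 1"
      by (simp add: B_def kron_sum_right[symmetric] sQ kron_scaleR_right kron_mat1)
    finally show ?thesis by (simp add: scaleR_mat1_mv)
  qed
  have sumk: "w \<bullet> ((\<Sum>i\<in>I. kron (P i) (Q i)) *v w) = (\<Sum>i\<in>I. k i)"
    by (simp add: k_def K_def sum_mvmult inner_sum_right)
  have "(\<Sum>i\<in>I. k i) \<le> (\<Sum>i\<in>I. (a i + b i) / 2)"
    by (rule sum_mono) (use ka in fastforce)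
  also have "\<dots> = s * (w \<bullet> w)"
    using suma sumb by (simp add: sum_divide_distrib[symmetric] sum.distrib)
  finally show "w \<bullet> ((\<Sum>i\<in>I. kron (P i) (Q i)) *v w) \<le> s * (w \<bullet> w)" using sumk by simp
  assume eq: "w \<bullet> ((\<Sum>i\<in>I. kron (P i) (Q i)) *v w) = s * (w \<bullet> w)"
  have "(\<Sum>i\<in>I. (a i + b i) / 2 - k i) = 0"
    using suma sumb sumk eq by (simp add: sum_subtractf sum_divide_distrib[symmetric] sum.distrib)
  then have z: "\<forall>i\<in>I. (a i + b i) / 2 - k i = 0"
    using sum_nonneg_eq_0_iff[OF fin, of "\<lambda>i. (a i + b i) / 2 - k i"] ka by fastforce
  show "\<forall>i\<in>I. kron (P i) (mat 1) *v w = kron (mat 1) (Q i) *v w"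
  proof
    fix i assume i: "i \<in> I"
    have "k i = a i" "k i = b i" using z ka[OF i] i by fastforce+
    have Kp: "transpose (K i) = K i" "K i ** K i = K i"
      using kron_proj[OF pp[OF i] qp[OF i]] K_def by auto
    have e1: "B i *v (A i *v w) = A i *v w"
    proof (rule proj_norm(2)[OF Bp[OF i]])
      have "(B i *v (A i *v w)) \<bullet> (B i *v (A i *v w)) = k i"
        using proj_dot[OF Kp, of w] by (simp add: k_def KAB(2)[of i] matrix_vector_mul_assoc)
      also have "\<dots> = (A i *v w) \<bullet> (A i *v w)"
        using proj_dot[OF Ap[OF i], of w] \<open>k i = a i\<close> by (simp add: a_def)
      finally show "(B i *v (A i *v w)) \<bullet> (B i *v (A i *v w)) = (A i *v w) \<bullet> (A i *v w)" .
    qed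
    have e2: "A i *v (B i *v w) = B i *v w"
    proof (rule proj_norm(2)[OF Ap[OF i]])
      have "(A i *v (B i *v w)) \<bullet> (A i *v (B i *v w)) = k i"
        using proj_dot[OF Kp, of w] by (simp add: k_def KAB(1)[of i] matrix_vector_mul_assoc)
      also have "\<dots> = (B i *v w) \<bullet> (B i *v w)"
        using proj_dot[OF Bp[OF i], of w] \<open>k i = b i\<close> by (simp add: b_def)
      finally show "(A i *v (B i *v w)) \<bullet> (A i *v (B i *v w)) = (B i *v w) \<bullet> (B i *v w)" .
    qed
    have "A i *v (B i *v w) = B i *v (A i *v w)"
      using KAB[of i] by (simp add: matrix_vector_mul_assoc)
    with e1 e2 show "kron (P i) (mat 1) *v w = kron (mat 1) (Q i) *v w"
      by (simp add: A_def B_def)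
  qed
qed

definition revec :: "complex^'m \<Rightarrow> real^'m" where "revec v = (\<chi> p. Re (v $ p))"
definition imvec :: "complex^'m \<Rightarrow> real^'m" where "imvec v = (\<chi> p. Im (v $ p))"

lemma vec_decomp: "v = cvec (revec v) + \<i> *s cvec (imvec v)"
  by (simp add: vec_eq_iff cvec_def revec_def imvec_def complex_eq_iff)

lemma complex_eig_real:
  fixes R :: "real^'m::finite^'m" and v :: "complex^'m"
  assumes sym: "transpose R = R" and ev: "cmat R *v v = c *s v" and nz: "v \<noteq> 0"
  shows "Im c = 0" "R *v revec v = Re c *\<^sub>R revec v" "R *v imvec v = Re c *\<^sub>R imvec v"
    "revec v \<noteq> 0 \<or> imvec v \<noteq> 0"
proof -
  define x where "x = revec v"
  define y where "y = imvec v"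
  have h: "(cmat R *v v) $ p = (\<Sum>q\<in>UNIV. complex_of_real (R $ p $ q) * v $ q)" for p
    by (simp add: matrix_vector_mult_def cmat_def)
  have e1: "R *v x = Re c *\<^sub>R x - Im c *\<^sub>R y"
  proof -
    have "Re ((cmat R *v v) $ p) = Re ((c *s v) $ p)" for p using ev by simp
    then show ?thesis unfolding h
      by (simp add: vec_eq_iff x_def y_def revec_def imvec_def matrix_vector_mult_def Re_sum)
  qed
  have e2: "R *v y = Im c *\<^sub>R x + Re c *\<^sub>R y"
  proof -
    have "Im ((cmat R *v v) $ p) = Im ((c *s v) $ p)" for p using ev by simp
    then show ?thesis unfolding h
      by (simp add: vec_eq_iff x_def y_def revec_def imvec_def matrix_vector_mult_def Im_sum)
  qed
  have "y \<bullet> (R *v x) = (R *v y) \<bullet> x" by (rule sym_dot[OF sym])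
  then have "Im c * (x \<bullet> x + y \<bullet> y) = 0"
    unfolding e1 e2 by (simp add: inner_diff_right inner_add_left inner_commute algebra_simps)
  moreover have xy: "x \<noteq> 0 \<or> y \<noteq> 0"
    using nz vec_decomp[of v] by (auto simp: x_def y_def cvec_def vec_eq_iff)
  moreover have "x \<bullet> x + y \<bullet> y > 0"
    using xy by (metis add_nonneg_pos add_pos_nonneg inner_ge_zero inner_gt_zero_iff)
  ultimately show ic: "Im c = 0" by simp
  show "R *v revec v = Re c *\<^sub>R revec v" using e1 ic x_def by simp
  show "R *v imvec v = Re c *\<^sub>R imvec v" using e2 ic y_def by simp
  show "revec v \<noteq> 0 \<or> imvec v \<noteq> 0" using xy x_def y_def by simp
qed

lemma transpose_add: "transpose (A + B) = transpose A + transpose (B::'a::semiring_1^'n^'m)"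
  by (simp add: transpose_def vec_eq_iff)

lemma transpose_diff: "transpose (A - B) = transpose A - transpose (B::'a::ring_1^'n^'m)"
  by (simp add: transpose_def vec_eq_iff)

lemma matrix_add_rdistrib: "((B + C) ** A) = (B ** A) + (C ** (A::'a::semiring_1^'n^'m))"
  by (simp add: matrix_matrix_mult_def vec_eq_iff distrib_right sum.distrib)

lemma comm_shift:
  fixes P S :: "real^'n::finite^'n"
  assumes "P ** S = S ** P"
  shows "P ** (S - c *\<^sub>R mat 1) = (S - c *\<^sub>R mat 1) ** P"
  unfolding matrix_eq
proof
  fix y
  have "P *v (S *v y) = S *v (P *v y)" using assms by (simp add: matrix_vector_mul_assoc)
  then show "(P ** (S - c *\<^sub>R mat 1)) *v y = ((S - c *\<^sub>R mat 1) ** P) *v y"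
    by (simp add: matrix_vector_mul_assoc[symmetric] matrix_vector_mult_diff_rdistrib
        matrix_vector_mult_diff_distrib scaleR_mat1_mv matrix_vector_mult_scaleR)
qed

lemma inv_eig:
  fixes P :: "nat \<Rightarrow> real^'n::finite^'n"
  assumes fP: "frakP_quadruple P" and comm: "\<forall>i\<in>{1..4}. P i ** T = T ** P i"
  shows "{v. cmat T *v v = c *s v} = {0} \<or> {v. cmat T *v v = c *s v} = UNIV"
proof -
  define W where "W = {v. cmat T *v v = c *s v}"
  have irr: "\<And>W::(complex^'n) set. csubspace W \<and> (\<forall>i\<in>{1..4}. \<forall>x\<in>W. cmat (P i) *v x \<in> W)
        \<Longrightarrow> W = {0} \<or> W = UNIV"
    using fP unfolding frakP_quadruple_def by blast
  have "csubspace W"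
    unfolding csubspace_def W_def
    by (auto simp: matrix_vector_right_distrib vector_scalar_commute vector_smult_assoc mult.commute
        vec_eq_iff algebra_simps)
  moreover have "\<forall>i\<in>{1..4}. \<forall>x\<in>W. cmat (P i) *v x \<in> W"
  proof (intro ballI)
    fix i x assume i: "i \<in> {1..4::nat}" and x: "x \<in> W"
    have "cmat T *v (cmat (P i) *v x) = cmat (P i) *v (cmat T *v x)"
      using comm i by (simp add: matrix_vector_mul_assoc cmat_mult[symmetric])
    also have "\<dots> = c *s (cmat (P i) *v x)" using x by (simp add: W_def vector_scalar_commute)
    finally show "cmat (P i) *v x \<in> W" by (simp add: W_def)
  qed
  ultimately show ?thesis using irr W_def by blast
qed

lemma psd_ker:
  fixes T :: "real^'m::finite^'m"
  assumes sym: "transpose T = T" and psd: "\<And>y. 0 \<le> y \<bullet> (T *v y)" and x0: "x \<bullet> (T *v x) = 0"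
  shows "T *v x = 0"
proof -
  define z where "z = T *v x"
  define a where "a = z \<bullet> z"
  define b where "b = z \<bullet> (T *v z)"
  have b0: "b \<ge> 0" using psd b_def by simp
  have exp: "(x + t *\<^sub>R z) \<bullet> (T *v (x + t *\<^sub>R z)) = 2 * t * a + t * t * b" for t
  proof -
    have "x \<bullet> (T *v z) = a" using sym_dot[OF sym, of x z] by (simp add: a_def z_def)
    then show ?thesis using x0
      by (simp add: matrix_vector_right_distrib matrix_vector_mult_scaleR inner_add_left inner_add_right
          a_def b_def z_def[symmetric] inner_commute algebra_simps)
  qed
  define t where "t = - a / (b + 1)"
  have "0 \<le> 2 * t * a + t * t * b" using psd[of "x + t *\<^sub>R z"] exp by simp
  then have "0 \<le> (2 * t * a + t * t * b) * ((b + 1) * (b + 1))" using b0 by simp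
  also have "\<dots> = 2*a*(t*(b+1))*(b+1) + (t*(b+1))*(t*(b+1))*b" by (simp add: algebra_simps)
  also have "t*(b+1) = -a" using b0 by (simp add: t_def)
  also have "2*a*(-a)*(b+1) + (-a)*(-a)*b = - (a * a) * (b + 2)" by (simp add: algebra_simps)
  finally have "a * a * (b + 2) \<le> 0" by simp
  then have "a * a \<le> 0" using b0 by (auto simp: mult_le_0_iff)
  then have "a = 0" by (metis mult_eq_0_iff order_antisym zero_le_square)
  then show ?thesis by (simp add: a_def z_def)
qed

lemma neg_mv: "(- A) *v y = - (A *v (y::'a::comm_ring_1^'m::finite))"
  by (simp add: matrix_vector_mult_def vec_eq_iff sum_negf)

lemma transpose_neg: "transpose (- A) = - transpose (A::'a::ring_1^'n^'m)"
  by (simp add: transpose_def vec_eq_iff)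

lemma sym_comm_scalar:
  fixes P :: "nat \<Rightarrow> real^'n::finite^'n"
  assumes fP: "frakP_quadruple P" and sym: "transpose S = S"
    and comm: "\<forall>i\<in>{1..4}. P i ** S = S ** P i"
  shows "\<exists>\<mu>. S = \<mu> *\<^sub>R mat 1"
proof -
  have "\<exists>x\<in>sphere (0::real^'n) 1. \<forall>y\<in>sphere 0 1. y \<bullet> (S *v y) \<le> x \<bullet> (S *v x)"
  proof (rule continuous_attains_sup)
    show "compact (sphere (0::real^'n) 1)" by simp
    show "sphere (0::real^'n) 1 \<noteq> {}"
      using norm_axis_1[of undefined] by (metis dist_0_norm empty_iff mem_sphere)
    show "continuous_on (sphere 0 1) (\<lambda>x::real^'n. x \<bullet> (S *v x))"
      by (intro continuous_intros)
  qed
  then obtain x where x: "norm x = 1" and mx: "\<And>y. norm y = 1 \<Longrightarrow> y \<bullet> (S *v y) \<le> x \<bullet> (S *v x)"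
    by auto
  define lam where "lam = x \<bullet> (S *v x)"
  define T where "T = S - lam *\<^sub>R mat 1"
  have Tv: "T *v y = S *v y - lam *\<^sub>R y" for y
    by (simp add: T_def matrix_vector_mult_diff_rdistrib scaleR_mat1_mv)
  have bound: "y \<bullet> (S *v y) \<le> lam * (y \<bullet> y)" for y
  proof (cases "y = 0")
    case True then show ?thesis by simp
  next
    case False
    define u where "u = (1 / norm y) *\<^sub>R y"
    have "norm u = 1" using False by (simp add: u_def)
    then have "u \<bullet> (S *v u) \<le> lam" using mx lam_def by simp
    moreover have "u \<bullet> (S *v u) = (y \<bullet> (S *v y)) / (norm y)^2"
      by (simp add: u_def matrix_vector_mult_scaleR power2_eq_square)
    moreover have "y \<bullet> y = (norm y)^2" by (simp add: power2_norm_eq_inner)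
    ultimately show ?thesis using False by (simp add: divide_le_eq mult.commute)
  qed
  have Tsym: "transpose T = T" by (simp add: T_def transpose_diff transpose_scalar sym)
  have Tpsd: "0 \<le> y \<bullet> ((- T) *v y)" for y
    using bound[of y] by (simp add: neg_mv Tv inner_diff_right)
  have Tx: "x \<bullet> ((- T) *v x) = 0"
    using x by (simp add: neg_mv Tv inner_diff_right lam_def power2_norm_eq_inner[symmetric])
  have "(- T) *v x = 0"
    by (rule psd_ker[OF _ Tpsd Tx]) (simp add: Tsym transpose_neg)
  then have Tx0: "T *v x = 0"
    by (simp add: neg_mv)
  have commT: "\<forall>i\<in>{1..4}. P i ** T = T ** P i" using comm comm_shift T_def by blast
  have W: "{v. cmat T *v v = 0 *s v} = {0} \<or> {v. cmat T *v v = 0 *s v} = UNIV"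
    by (rule inv_eig[OF fP commT])
  have "cvec x \<in> {v. cmat T *v v = 0 *s v}"
    using Tx0 cmat_cvec[of T x] by (simp add: cvec_def vec_eq_iff)
  moreover have "x \<noteq> 0" using x by auto
  then have "cvec x \<noteq> 0" by (auto simp: cvec_def vec_eq_iff)
  ultimately have U: "{v. cmat T *v v = 0 *s v} = UNIV" using W by blast
  have "T *v y = 0" for y
  proof -
    have "cmat T *v cvec y = 0" using U by auto
    then have "cvec (T *v y) = cvec 0" unfolding cmat_cvec by (simp add: cvec_def vec_eq_iff)
    then show ?thesis by (rule cvec_inj)
  qed
  then have "T = 0" by (simp add: matrix_eq)
  then show ?thesis unfolding T_def by (metis eq_iff_diff_eq_0)
qed

lemma frakP_sym: "frakP_quadruple P \<Longrightarrow> i \<in> {1..4} \<Longrightarrow> transpose (P i) = P i"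
  by (simp add: frakP_quadruple_def orth_proj_def)

lemma comm_scalar:
  fixes P :: "nat \<Rightarrow> real^'n::finite^'n"
  assumes fP: "frakP_quadruple P" and comm: "\<forall>i\<in>{1..4}. P i ** X = X ** P i"
  shows "\<exists>a. X = a *\<^sub>R mat 1"
proof -
  define Xt where "Xt = transpose X"
  have commt: "\<forall>i\<in>{1..4}. P i ** Xt = Xt ** P i"
  proof
    fix i :: nat assume i: "i \<in> {1..4}"
    have "transpose (X ** P i) = transpose (P i ** X)" using comm i by simp
    then show "P i ** Xt = Xt ** P i"
      using frakP_sym[OF fP i] by (simp add: matrix_transpose_mul Xt_def)
  qed
  obtain \<alpha> where \<alpha>: "X + Xt = \<alpha> *\<^sub>R mat 1"
  proof -
    have "\<exists>\<mu>. X + Xt = \<mu> *\<^sub>R mat 1"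
    proof (rule sym_comm_scalar[OF fP])
      show "transpose (X + Xt) = X + Xt" by (simp add: transpose_add Xt_def add.commute)
      show "\<forall>i\<in>{1..4}. P i ** (X + Xt) = (X + Xt) ** P i"
        using comm commt by (simp add: matrix_add_ldistrib matrix_add_rdistrib)
    qed
    then show ?thesis using that by blast
  qed
  obtain \<beta> where \<beta>: "Xt ** X = \<beta> *\<^sub>R mat 1"
  proof -
    have "\<exists>\<mu>. Xt ** X = \<mu> *\<^sub>R mat 1"
    proof (rule sym_comm_scalar[OF fP])
      show "transpose (Xt ** X) = Xt ** X" by (simp add: matrix_transpose_mul Xt_def)
      show "\<forall>i\<in>{1..4}. P i ** (Xt ** X) = (Xt ** X) ** P i"
        using comm commt by (metis matrix_mul_assoc)
    qed
    then show ?thesis using that by blast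
  qed
  have Xtv: "Xt *v y = \<alpha> *\<^sub>R y - X *v y" for y
    using arg_cong[OF \<alpha>, of "\<lambda>A. A *v y"] by (simp add: matrix_vector_mult_add_rdistrib scaleR_mat1_mv algebra_simps)
  have XtX: "Xt *v (X *v y) = \<beta> *\<^sub>R y" for y
    using arg_cong[OF \<beta>, of "\<lambda>A. A *v y"] by (simp add: matrix_vector_mul_assoc scaleR_mat1_mv)
  have XX: "X *v (X *v y) = \<alpha> *\<^sub>R (X *v y) - \<beta> *\<^sub>R y" for y
    using Xtv[of "X *v y"] XtX[of y] by (simp add: algebra_simps)
  define a where "a = \<alpha> / 2"
  define d where "d = \<beta> - a * a"
  define Y where "Y = X - a *\<^sub>R mat 1"
  have Yv: "Y *v y = X *v y - a *\<^sub>R y" for y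
    by (simp add: Y_def matrix_vector_mult_diff_rdistrib scaleR_mat1_mv)
  have al: "\<alpha> = a + a" by (simp add: a_def)
  have YY: "Y *v (Y *v y) = (- d) *\<^sub>R y" for y
  proof -
    have "Y *v (Y *v y) = X *v (X *v y) - a *\<^sub>R (X *v y) - a *\<^sub>R (X *v y) + (a * a) *\<^sub>R y"
      by (simp add: Yv matrix_vector_mult_diff_distrib matrix_vector_mult_scaleR scaleR_diff_right)
    also have "\<dots> = (- d) *\<^sub>R y"
      unfolding XX al d_def by (simp add: scaleR_left_distrib scaleR_diff_left)
        (metis mult_2 scaleR_2 scaleR_scaleR mult.commute)
    finally show ?thesis .
  qed
  have tY: "transpose Y = Xt - a *\<^sub>R mat 1" by (simp add: Y_def transpose_diff transpose_scalar Xt_def)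
  have YT: "y v* Y = - (Y *v y)" for y
  proof -
    have "y v* Y = transpose Y *v y" by simp
    also have "\<dots> = Xt *v y - a *\<^sub>R y" unfolding tY
      by (simp add: matrix_vector_mult_diff_rdistrib scaleR_mat1_mv)
    also have "\<dots> = (a + a) *\<^sub>R y - X *v y - a *\<^sub>R y" unfolding Xtv al ..
    also have "\<dots> = - (Y *v y)" by (simp add: Yv scaleR_left_distrib algebra_simps)
        (metis mult_2_right scaleR_2 scaleR_scaleR)
    finally show ?thesis .
  qed
  have Ynorm: "(Y *v y) \<bullet> (Y *v y) = d * (y \<bullet> y)" for y
    using dot_lmul_matrix[of y Y "Y *v y"] by (simp add: YT YY)
  define e :: "real^'n" where "e = axis undefined 1"
  have ee: "e \<bullet> e = 1" by (simp add: e_def)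
  have d0: "d \<ge> 0" using Ynorm[of e] ee by (metis inner_ge_zero mult.right_neutral)
  show ?thesis
  proof (cases "d = 0")
    case True
    then have "Y *v y = 0" for y using Ynorm[of y] by simp
    then have "X *v y = (a *\<^sub>R mat 1) *v y" for y using Yv[of y] by (simp add: scaleR_mat1_mv)
    then show ?thesis by (metis matrix_eq)
  next
    case False
    then have dpos: "d > 0" using d0 by simp
    define r where "r = sqrt d"
    have rr: "r * r = d" using d0 by (simp add: r_def)
    have rpos: "r > 0" using dpos by (simp add: r_def)
    define c where "c = \<i> * complex_of_real r"
    have commY: "\<forall>i\<in>{1..4}. P i ** Y = Y ** P i" using comm comm_shift Y_def by blast
    have W: "{v. cmat Y *v v = c *s v} = {0} \<or> {v. cmat Y *v v = c *s v} = UNIV"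
      by (rule inv_eig[OF fP commY])
    define v where "v = complex_of_real r *s cvec e - \<i> *s cvec (Y *v e)"
    have "cmat Y *v v = complex_of_real r *s cvec (Y *v e) - \<i> *s cvec (Y *v (Y *v e))"
      by (simp add: v_def matrix_vector_mult_diff_distrib vector_scalar_commute cmat_cvec)
    also have "\<dots> = c *s v"
      unfolding YY v_def c_def
      by (simp add: vec_eq_iff cvec_def complex_eq_iff rr[symmetric])
    finally have vin: "v \<in> {v. cmat Y *v v = c *s v}" by simp
    have "Re (v $ undefined) = r" by (simp add: v_def cvec_def e_def)
    then have "v \<noteq> 0" using rpos by auto
    then have U: "{v. cmat Y *v v = c *s v} = UNIV" using W vin by blast
    then have "cmat Y *v cvec e = c *s cvec e" by auto
    then have "cvec (Y *v e) $ undefined = (c *s cvec e) $ undefined" by (simp add: cmat_cvec)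
    then have "Im (cvec (Y *v e) $ undefined) = Im ((c *s cvec e) $ undefined)" by simp
    then have "r = 0" by (simp add: cvec_def c_def e_def)
    then show ?thesis using rpos by simp
  qed
qed

lemma shift_contra:
  fixes P :: "nat \<Rightarrow> real^'n::finite^'n"
  assumes fP: "frakP_quadruple P" and X0: "X \<noteq> 0"
    and rel: "\<forall>i\<in>{1..4}. \<sigma> i \<in> {1..4} \<and> P i ** X = X ** P (\<sigma> i)"
    and s1: "\<sigma> 1 \<noteq> 1"
  shows False
proof -
  define Xt where "Xt = transpose X"
  have relt: "Xt ** P i = P (\<sigma> i) ** Xt" if i: "i \<in> {1..4}" for i
  proof -
    have "transpose (P i ** X) = transpose (X ** P (\<sigma> i))" using rel i by simp
    then show ?thesis using frakP_sym[OF fP i] frakP_sym[OF fP, of "\<sigma> i"] rel i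
      by (simp add: matrix_transpose_mul Xt_def)
  qed
  obtain \<alpha> where \<alpha>: "X ** Xt = \<alpha> *\<^sub>R mat 1"
  proof -
    have "\<exists>\<mu>. X ** Xt = \<mu> *\<^sub>R mat 1"
    proof (rule sym_comm_scalar[OF fP])
      show "transpose (X ** Xt) = X ** Xt" by (simp add: matrix_transpose_mul Xt_def)
      show "\<forall>i\<in>{1..4}. P i ** (X ** Xt) = (X ** Xt) ** P i"
      proof
        fix i :: nat assume i: "i \<in> {1..4}"
        have "P i ** (X ** Xt) = (X ** P (\<sigma> i)) ** Xt" using rel i by (simp add: matrix_mul_assoc)
        also have "\<dots> = X ** (Xt ** P i)" using relt[OF i] by (simp add: matrix_mul_assoc)
        finally show "P i ** (X ** Xt) = (X ** Xt) ** P i" by (simp add: matrix_mul_assoc)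
      qed
    qed
    then show ?thesis using that by blast
  qed
  have "Xt \<noteq> 0" using X0 by (metis Xt_def transpose_iff transpose_mat mat_0)
  then obtain y where y: "Xt *v y \<noteq> 0" by (metis matrix_eq matrix_vector_mult_0)
  have "(Xt *v y) \<bullet> (Xt *v y) = y \<bullet> (X *v (Xt *v y))"
    using dot_lmul_matrix[of y X "Xt *v y"] by (simp add: Xt_def)
  also have "\<dots> = \<alpha> * (y \<bullet> y)" by (simp add: matrix_vector_mul_assoc \<alpha> scaleR_mat1_mv)
  finally have "\<alpha> \<noteq> 0" using y by auto
  define Z where "Z = (1 / \<alpha>) *\<^sub>R Xt"
  have XZ: "X ** Z = mat 1" using \<open>\<alpha> \<noteq> 0\<close> by (simp add: Z_def matrix_scalar_ac scalar_matrix_assoc[symmetric] \<alpha>)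
  then have ZX: "Z ** X = mat 1" by (simp add: matrix_left_right_inverse)
  define j where "j = \<sigma> 1"
  have r1: "P 1 ** X = X ** P j" using rel j_def by simp
  have "P j = Z ** (P 1 ** X)" using r1 ZX by (simp add: matrix_mul_assoc)
  then have "rank (P j) \<le> rank (P 1)"
    by (metis rank_mul_le_left rank_mul_le_right order_trans)
  moreover have "P 1 = (X ** P j) ** Z" using r1 XZ by (metis matrix_mul_assoc matrix_mul_rid)
  then have "rank (P 1) \<le> rank (P j)"
    by (metis rank_mul_le_left rank_mul_le_right order_trans)
  ultimately have eq: "rank (P j) = rank (P 1)" by simp
  have "j \<in> {2..4}" using rel s1 j_def by force
  then have "rank (P j) = CARD('n) div 2" using fP by (simp add: frakP_quadruple_def)
  moreover have "int (rank (P 1)) = int (CARD('n) div 2) - (-1) ^ CARD('n)"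
    using fP by (simp add: frakP_quadruple_def)
  ultimately show False using eq by simp
qed

lemma scaleR_mv: "(c *\<^sub>R A) *v x = c *\<^sub>R (A *v (x::real^'m::finite))"
  by (simp add: vec_eq_iff matrix_vector_mult_def sum_distrib_left mult_ac)

lemma transpose_sum: "transpose (\<Sum>i\<in>I. A i) = (\<Sum>i\<in>I. transpose (A i :: 'a::comm_monoid_add^'n^'m))"
  by (simp add: transpose_def vec_eq_iff)

lemma sigma_facts:
  assumes "\<exists>k::nat. \<forall>i\<in>{1..4}. \<sigma> i = (i - 1 + k) mod 4 + 1"
  shows "(\<sigma> 1 = 1 \<and> \<sigma> 2 = 2 \<and> \<sigma> 3 = 3 \<and> \<sigma> 4 = 4) \<or> (\<sigma> 1 = 2 \<and> \<sigma> 2 = 3 \<and> \<sigma> 3 = 4 \<and> \<sigma> 4 = 1) \<or>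
         (\<sigma> 1 = 3 \<and> \<sigma> 2 = 4 \<and> \<sigma> 3 = 1 \<and> \<sigma> 4 = 2) \<or> (\<sigma> 1 = 4 \<and> \<sigma> 2 = 1 \<and> \<sigma> 3 = 2 \<and> \<sigma> 4 = 3)"
proof -
  obtain k where hk: "\<forall>i\<in>{1..4}. \<sigma> i = (i - 1 + k) mod 4 + 1" using assms by blast
  have "\<sigma> 1 = k mod 4 + 1" "\<sigma> 2 = (1 + k) mod 4 + 1" "\<sigma> 3 = (2 + k) mod 4 + 1" "\<sigma> 4 = (3 + k) mod 4 + 1"
    using hk by auto
  then show ?thesis by presburger
qed

theorem lemma4p1:
  fixes P :: "nat \<Rightarrow> real^'n::finite^'n"
    and \<sigma> :: "nat \<Rightarrow> nat"
    and M :: "complex^('n \<times> 'n)^('n \<times> 'n)"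
  assumes "frakP_quadruple P"
    and "\<exists>k::nat. \<forall>i\<in>{1..4}. \<sigma> i = (i - 1 + k) mod 4 + 1"
    and "M = (real CARD('n) / (2 * real CARD('n) - 1)) *\<^sub>R
               (\<Sum>i=1..4. kron (cmat (P i)) (cmat (P (\<sigma> i))))"
  shows "((\<forall>i\<in>{1..4}. \<sigma> i = i) \<longrightarrow>
            is_eigenvalue M 1 \<and>
            (\<forall>c. is_eigenvalue M c \<longrightarrow> c \<in> \<real> \<and> Re c \<le> 1) \<and>
            {v. M *v v = v} = range (\<lambda>c. c *s max_ent))
       \<and> ((\<exists>i\<in>{1..4}. \<sigma> i \<noteq> i) \<longrightarrow>
            (\<forall>c. is_eigenvalue M c \<longrightarrow> c \<in> \<real> \<and> Re c < 1))"
proof -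
  note fP = assms(1)
  define n where "n = real CARD('n)"
  have n1: "n \<ge> 1" by (simp add: n_def Suc_le_eq)
  define c0 where "c0 = n / (2 * n - 1)"
  define s where "s = 2 - 1 / n"
  have c0s: "c0 * s = 1" using n1 by (simp add: c0_def s_def field_simps)
  have c0pos: "c0 > 0" using n1 by (simp add: c0_def)
  have s4: "{1..4::nat} = {1,2,3,4}" by auto
  have sc: "(\<sigma> 1 = 1 \<and> \<sigma> 2 = 2 \<and> \<sigma> 3 = 3 \<and> \<sigma> 4 = 4) \<or> (\<sigma> 1 = 2 \<and> \<sigma> 2 = 3 \<and> \<sigma> 3 = 4 \<and> \<sigma> 4 = 1) \<or>
         (\<sigma> 1 = 3 \<and> \<sigma> 2 = 4 \<and> \<sigma> 3 = 1 \<and> \<sigma> 4 = 2) \<or> (\<sigma> 1 = 4 \<and> \<sigma> 2 = 1 \<and> \<sigma> 3 = 2 \<and> \<sigma> 4 = 3)"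
    by (rule sigma_facts[OF assms(2)])
  have S1: "\<forall>i\<in>{1..4}. \<sigma> i \<in> {1..4}" using sc s4 by auto
  have S2: "(\<Sum>i=1..4. P (\<sigma> i)) = (\<Sum>i=1..4. P i)" using sc unfolding s4 by (auto simp: add_ac)
  have S3: "(\<exists>i\<in>{1..4}. \<sigma> i \<noteq> i) \<Longrightarrow> \<sigma> 1 \<noteq> 1" using sc s4 by auto
  have Pproj: "\<And>i. i \<in> {1..4} \<Longrightarrow> orth_proj (P i)" using fP by (simp add: frakP_quadruple_def)
  have sP: "(\<Sum>i=1..4. P i) = s *\<^sub>R mat 1" using fP by (simp add: frakP_quadruple_def s_def n_def)
  define Q where "Q i = P (\<sigma> i)" for i
  have Qproj: "\<And>i. i \<in> {1..4} \<Longrightarrow> orth_proj (Q i)" using S1 Pproj Q_def by auto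
  have sQ: "(\<Sum>i=1..4. Q i) = s *\<^sub>R mat 1" using S2 sP Q_def by simp
  define R where "R = c0 *\<^sub>R (\<Sum>i=1..4. kron (P i) (Q i))"
  have MR: "M = cmat R"
    by (simp add: assms(3) R_def cmat_scaleR cmat_sum cmat_kron Q_def c0_def n_def)
  have Rsym: "transpose R = R"
  proof -
    have "transpose (kron (P i) (Q i)) = kron (P i) (Q i)" if "i \<in> {1..4}" for i
      using kron_proj(1)[OF Pproj[OF that] Qproj[OF that]] .
    then show ?thesis by (simp add: R_def transpose_scalar transpose_sum)
  qed
  have fin: "finite {1..4::nat}" by simp
  have quad: "w \<bullet> (R *v w) \<le> w \<bullet> w" for w
  proof -
    have "w \<bullet> ((\<Sum>i=1..4. kron (P i) (Q i)) *v w) \<le> s * (w \<bullet> w)"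
      by (rule quad_bound(1)[OF fin Pproj Qproj sP sQ])
    then have "c0 * (w \<bullet> ((\<Sum>i=1..4. kron (P i) (Q i)) *v w)) \<le> c0 * (s * (w \<bullet> w))"
      using c0pos by simp
    moreover have "c0 * (s * (w \<bullet> w)) = w \<bullet> w" using c0s by (metis mult.assoc mult_1)
    ultimately show ?thesis by (simp add: R_def scaleR_mv)
  qed
  have fixrel: "\<forall>i\<in>{1..4}. P i ** unvec w = unvec w ** Q i" if Rw: "R *v w = w" for w
  proof -
    have "c0 * (w \<bullet> ((\<Sum>i=1..4. kron (P i) (Q i)) *v w)) = c0 * (s * (w \<bullet> w))"
    proof -
      have "c0 * (s * (w \<bullet> w)) = w \<bullet> w" using c0s by (metis mult.assoc mult_1)
      then show ?thesis using arg_cong[OF Rw, of "\<lambda>z. w \<bullet> z"] by (simp add: R_def scaleR_mv)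
    qed
    then have "w \<bullet> ((\<Sum>i=1..4. kron (P i) (Q i)) *v w) = s * (w \<bullet> w)" using c0pos by simp
    then have h: "\<forall>i\<in>{1..4}. kron (P i) (mat 1) *v w = kron (mat 1) (Q i) *v w"
      using quad_bound(2)[OF fin Pproj Qproj sP sQ] by blast
    show ?thesis
    proof
      fix i :: nat assume i: "i \<in> {1..4}"
      have "(P i ** unvec w) $ a $ b = (unvec w ** transpose (Q i)) $ a $ b" for a b
        using h i kron_left_apply[of "P i" w a b] kron_right_apply[of "Q i" w a b] by simp
      moreover have "transpose (Q i) = Q i" using Qproj[OF i] by (simp add: orth_proj_def)
      ultimately show "P i ** unvec w = unvec w ** Q i"
        by (simp add: vec_eq_iff)
    qed
  qed
  have unvec0: "unvec w \<noteq> 0" if "w \<noteq> 0" for w :: "real^('n\<times>'n)"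
    using that unvec_inj[of w 0] by (auto simp: unvec_def vec_eq_iff)
  have eig: "c \<in> \<real> \<and> Re c \<le> 1 \<and> (Re c = 1 \<longrightarrow> (\<exists>w. w \<noteq> 0 \<and> R *v w = w))"
    if evc: "is_eigenvalue M c" for c
  proof -
    obtain v where v: "v \<noteq> 0" "cmat R *v v = c *s v" using evc MR by (auto simp: is_eigenvalue_def)
    note ce = complex_eig_real[OF Rsym v(2) v(1)]
    obtain w where w: "w \<noteq> 0" "R *v w = Re c *\<^sub>R w" using ce(2,3,4) by blast
    have "Re c * (w \<bullet> w) \<le> 1 * (w \<bullet> w)" using quad[of w] w(2) by simp
    then have "Re c \<le> 1" using w(1) by (simp add: mult_le_cancel_right)
    moreover have "c \<in> \<real>" using ce(1) by (simp add: complex_is_Real_iff)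
    ultimately show ?thesis using w by auto
  qed
  show ?thesis
  proof (intro conjI impI allI)
    assume ns: "\<exists>i\<in>{1..4}. \<sigma> i \<noteq> i"
    fix c assume ev: "is_eigenvalue M c"
    show "c \<in> \<real>" using eig[OF ev] by simp
    show "Re c < 1"
    proof (rule ccontr)
      assume "\<not> Re c < 1"
      then have "Re c = 1" using eig[OF ev] by simp
      then obtain w where w: "w \<noteq> 0" "R *v w = w" using eig[OF ev] by blast
      show False
      proof (rule shift_contra[OF fP unvec0[OF w(1)]])
        show "\<forall>i\<in>{1..4}. \<sigma> i \<in> {1..4} \<and> P i ** unvec w = unvec w ** P (\<sigma> i)"
          using fixrel[OF w(2)] S1 Q_def by simp
        show "\<sigma> 1 \<noteq> 1" using S3 ns by simp
      qed
    qed
  next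
    fix c assume "\<forall>i\<in>{1..4}. \<sigma> i = i" "is_eigenvalue M c"
    then show "c \<in> \<real>" "Re c \<le> 1" using eig by auto
  next
    assume idd: "\<forall>i\<in>{1..4}. \<sigma> i = i"
    have QP: "Q i = P i" if "i \<in> {1..4}" for i using idd that Q_def by simp
    define u :: "real^('n\<times>'n)" where "u = (\<chi> p. if fst p = snd p then 1 / sqrt n else 0)"
    have me: "(max_ent :: complex^('n\<times>'n)) = cvec u"
      by (simp add: max_ent_def cvec_def u_def n_def vec_eq_iff)
    have uu: "unvec u = (1 / sqrt n) *\<^sub>R mat 1"
      by (simp add: unvec_def u_def mat_def vec_eq_iff)
    have AB: "kron (P i) (mat 1) *v u = kron (mat 1) (P i) *v u" if i: "i \<in> {1..4}" for i
    proof -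
      have tP: "transpose (P i) = P i" using Pproj[OF i] by (simp add: orth_proj_def)
      have "(kron (P i) (mat 1) *v u) $ (a,b) = (kron (mat 1) (P i) *v u) $ (a,b)" for a b
        unfolding kron_left_apply kron_right_apply uu tP
        by (simp add: matrix_scalar_ac scalar_matrix_assoc[symmetric])
      then show ?thesis by (simp add: vec_eq_iff)
    qed
    have Ku: "kron (P i) (Q i) *v u = kron (P i) (mat 1) *v u" if i: "i \<in> {1..4}" for i
    proof -
      have pp: "P i ** P i = P i" using Pproj[OF i] by (simp add: orth_proj_def)
      have "kron (P i) (Q i) = kron (P i) (mat 1) ** kron (mat 1) (P i)"
        using QP[OF i] by (simp add: kron_mult)
      then have "kron (P i) (Q i) *v u = kron (P i) (mat 1) *v (kron (P i) (mat 1) *v u)"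
        using AB[OF i] by (simp add: matrix_vector_mul_assoc[symmetric])
      also have "\<dots> = kron (P i) (mat 1) *v u" by (simp add: matrix_vector_mul_assoc kron_mult pp)
      finally show ?thesis .
    qed
    have Ru: "R *v u = u"
    proof -
      have "(\<Sum>i=1..4. kron (P i) (Q i)) *v u = (\<Sum>i=1..4. kron (P i) (mat 1) *v u)"
        unfolding sum_mvmult by (rule sum.cong) (auto simp: Ku)
      also have "\<dots> = kron (\<Sum>i=1..4. P i) (mat 1) *v u"
        by (simp add: sum_mvmult kron_sum_left)
      also have "\<dots> = s *\<^sub>R u" unfolding sP by (simp add: kron_scaleR_left kron_mat1 scaleR_mat1_mv)
      finally show ?thesis using c0s by (simp add: R_def scaleR_mv)
    qed
    have Mme: "M *v max_ent = max_ent" by (simp add: MR me cmat_cvec Ru)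
    have npos: "sqrt n > 0" using n1 by simp
    have "max_ent \<noteq> (0 :: complex^('n\<times>'n))"
    proof -
      have "u $ (undefined, undefined) \<noteq> 0" using npos by (simp add: u_def)
      then have "u \<noteq> 0" by auto
      then show ?thesis by (auto simp: me cvec_def vec_eq_iff)
    qed
    then show "is_eigenvalue M 1" using Mme by (auto simp: is_eigenvalue_def)
    have fixed: "\<exists>t. w = t *\<^sub>R u" if Rw: "R *v w = w" for w
    proof -
      have "\<forall>i\<in>{1..4}. P i ** unvec w = unvec w ** P i" using fixrel[OF Rw] QP by simp
      then obtain l where l: "unvec w = l *\<^sub>R mat 1" using comm_scalar[OF fP] by blast
      have "w $ (a,b) = ((l * sqrt n) *\<^sub>R u) $ (a,b)" for a b
        using arg_cong[OF l, of "\<lambda>X. X $ a $ b"] npos by (simp add: unvec_def u_def mat_def)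
      then show ?thesis by (metis vec_eq_iff prod.collapse)
    qed
    show "{v. M *v v = v} = range (\<lambda>c. c *s max_ent)"
    proof (intro set_eqI iffI)
      fix v :: "complex^('n\<times>'n)" assume "v \<in> range (\<lambda>c. c *s max_ent)"
      then obtain c where "v = c *s max_ent" by blast
      then show "v \<in> {v. M *v v = v}" using Mme by (simp add: vector_scalar_commute)
    next
      fix v :: "complex^('n\<times>'n)" assume "v \<in> {v. M *v v = v}"
      then have Mv: "cmat R *v v = 1 *s v" using MR by simp
      show "v \<in> range (\<lambda>c. c *s max_ent)"
      proof (cases "v = 0")
        case True then show ?thesis by (metis rangeI vector_smult_lzero)
      next
        case False
        note ce = complex_eig_real[OF Rsym Mv False]
        obtain t1 where t1: "revec v = t1 *\<^sub>R u" using fixed ce(2) by auto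
        obtain t2 where t2: "imvec v = t2 *\<^sub>R u" using fixed ce(3) by auto
        have "v = (complex_of_real t1 + \<i> * complex_of_real t2) *s max_ent"
          using vec_decomp[of v] unfolding t1 t2 me
          by (simp add: vec_eq_iff cvec_def algebra_simps)
        then show ?thesis by blast
      qed
    qed
  qed
qed

end
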